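(* Let $k$ be a positive integer and let $f:\mathbb R^N\to\mathbb R$ be a $C^{2k+1}$ function with a critical point at the origin and $f(0)=0$. Suppose $\{\mathbf x(t;\mathbf x_0)\}_{\mathbf x_0\in S}$ is a family of test trajectories that is indicative at order $2k$ for $f$, with $a_{2k}(\mathbf x_0)$ the coefficient of $t^{2k}$ in the Taylor expansion of $f(\mathbf x(t;\mathbf x_0))$ at $t=0$. Then: (a) If $a_{2k}(\mathbf x_0)>0$ for all $\mathbf x_0\in S$, then there exist $c>0$ and a neighborhood $U$ of the origin such that $f(\mathbf x)\ge c|\mathbf x|^{2k}$ for all $\mathbf x\in U$; in particular $f$ has a strict local minimum at the origin. (b) If $a_{2k}(\mathbf x_0)<0$ for all $\mathbf x_0\in S$, then there exist $c>0$ and a neighborhood $U$ of the origin such that $f(\mathbf x)\le -c|\mathbf x|^{2k}$ for all $\mathbf x\in U$; in particular $f$ has a strict local maximum at the origin. (c) If $a_{2k}(\mathbf x_0)>0$ for some $\mathbf x_0\in S$ and $a_{2k}(\mathbf x_0')<0$ for some $\mathbf x_0'\in S$, then the origin is a saddle point of $f$.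
   Context: A family of test trajectories $\{\mathbf x(t;\mathbf x_0)\}_{\mathbf x_0\in S}$ (with $S$ a set of parameter values in some Euclidean space) consists of maps defined for $t$ in a common interval $[0,\varepsilon]$ such that, for each fixed $\mathbf x_0\in S$, $t\mapsto\mathbf x(t;\mathbf x_0)\in\mathbb R^N$ is analytic and non-constant with $\mathbf x(0;\mathbf x_0)=0$. Such a family is indicative at order $2k$ for $f$ (where $f$ is $C^{2k+1}$ with a critical point at $0$ and $f(0)=0$) if: (I1) $S$ is compact; (I2) $(t,\mathbf x_0)\mapsto\mathbf x(t;\mathbf x_0)$ is $C^{2k+1}$; (I3) for every $0<\delta\le\varepsilon$ there is a neighborhood $U$ of the origin such that every $\mathbf x\in U$ equals $\mathbf x(t;\mathbf x_0)$ for some $\mathbf x_0\in S$ and $t\in[0,\delta]$; (I4) for every $\mathbf x_0\in S$, $f(\mathbf x(t;\mathbf x_0))=a_{2k}(\mathbf x_0)t^{2k}+o(t^{2k})$ as $t\to0$, i.e. all Taylor coefficients in $t$ of order less than $2k$ vanish. The origin is a saddle point of $f$ if every neighborhood of the origin contains points where $f>0$ and points where $f<0$. *)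

theory Defs
  imports "HOL-Analysis.Analysis" "HOL-Library.Landau_Symbols"
begin

primrec C_on :: "nat \<Rightarrow> 'a::euclidean_space set \<Rightarrow> ('a \<Rightarrow> real) \<Rightarrow> bool" where
  "C_on 0 U g \<longleftrightarrow> continuous_on U g"
| "C_on (Suc m) U g \<longleftrightarrow>
     (\<forall>i\<in>Basis. \<exists>g'. (\<forall>x\<in>U. ((\<lambda>t. g (x + t *\<^sub>R i)) has_real_derivative g' x) (at 0))
                      \<and> C_on m U g')"

definition C_vec_on :: "nat \<Rightarrow> 'a::euclidean_space set \<Rightarrow> ('a \<Rightarrow> 'b::euclidean_space) \<Rightarrow> bool" where
  "C_vec_on m U g \<longleftrightarrow> (\<forall>j\<in>Basis. C_on m U (\<lambda>x. g x \<bullet> j))"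

definition real_analytic_on :: "(real \<Rightarrow> 'a::real_normed_vector) \<Rightarrow> real set \<Rightarrow> bool" where
  "real_analytic_on g T \<longleftrightarrow>
     (\<forall>t0\<in>T. \<exists>r>0. \<exists>c::nat \<Rightarrow> 'a. \<forall>t. \<bar>t - t0\<bar> < r \<longrightarrow> (\<lambda>n. (t - t0) ^ n *\<^sub>R c n) sums g t)"

definition test_trajectories ::
    "(real \<Rightarrow> 'b::euclidean_space \<Rightarrow> 'a::euclidean_space) \<Rightarrow> 'b set \<Rightarrow> real \<Rightarrow> bool" where
  "test_trajectories x S \<epsilon> \<longleftrightarrow> \<epsilon> > 0 \<and>
     (\<forall>x0\<in>S. real_analytic_on (\<lambda>t. x t x0) {0..\<epsilon>} \<and> x 0 x0 = 0 \<and>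
              (\<exists>t\<in>{0..\<epsilon>}. x t x0 \<noteq> 0))"

text \<open>Indicative at order 2k for f, conditions (I1)-(I4). (I2) is read as: the map
  (t,x0) |-> x(t;x0) is C^(2k+1) on some open neighbourhood of [0,eps] x S.\<close>
definition indicative ::
    "(real \<Rightarrow> 'b::euclidean_space \<Rightarrow> 'a::euclidean_space) \<Rightarrow> 'b set \<Rightarrow> real \<Rightarrow> nat \<Rightarrow> ('a \<Rightarrow> real) \<Rightarrow> bool" where
  "indicative x S \<epsilon> k f \<longleftrightarrow>
     compact S \<and>
     (\<exists>W. open W \<and> {0..\<epsilon>} \<times> S \<subseteq> W \<and> C_vec_on (2*k+1) W (\<lambda>p. x (fst p) (snd p))) \<and>
     (\<forall>\<delta>. 0 < \<delta> \<and> \<delta> \<le> \<epsilon> \<longrightarrow>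
        (\<exists>U. open U \<and> 0 \<in> U \<and> (\<forall>y\<in>U. \<exists>x0\<in>S. \<exists>t\<in>{0..\<delta>}. y = x t x0))) \<and>
     (\<forall>x0\<in>S. \<exists>a::real. (\<lambda>t. f (x t x0) - a * t ^ (2*k)) \<in> o[at_right 0](\<lambda>t. t ^ (2*k)))"

definition saddle_point :: "('a::real_normed_vector \<Rightarrow> real) \<Rightarrow> bool" where
  "saddle_point f \<longleftrightarrow>
     (\<forall>U. open U \<and> 0 \<in> U \<longrightarrow> (\<exists>y\<in>U. f y > 0) \<and> (\<exists>y\<in>U. f y < 0))"

end

theory Submission
  imports Defs
begin

lemma partial_shift:
  fixes g :: "'a::euclidean_space \<Rightarrow> real"
  assumes "((\<lambda>t. g (p + s *\<^sub>R b + t *\<^sub>R b)) has_real_derivative D) (at 0)"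
  shows "((\<lambda>t. g (p + t *\<^sub>R b)) has_real_derivative D) (at s)" 
proof -
  have "((\<lambda>t. g (p + (t + s) *\<^sub>R b)) has_real_derivative D) (at 0)"
    using assms by (simp add: algebra_simps scaleR_add_left)
  then show ?thesis using DERIV_shift[of "\<lambda>t. g (p + t *\<^sub>R b)" D 0 s] by (simp only: add_0_left)
qed

lemma partials_imp_derivative:
  fixes g :: "'a::euclidean_space \<Rightarrow> real"
  assumes U: "open U" "p \<in> U"
  and D: "\<forall>i\<in>Basis. \<forall>q\<in>U. ((\<lambda>t. g (q + t *\<^sub>R i)) has_real_derivative G i q) (at 0)"
  and C: "\<forall>i\<in>Basis. continuous_on U (G i)"
  shows "(g has_derivative (\<lambda>v. \<Sum>i\<in>Basis. (v \<bullet> i) * G i p)) (at p)"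
  unfolding has_derivative_at_alt
proof (intro conjI allI impI)
  show "bounded_linear (\<lambda>v. \<Sum>i\<in>Basis. (v \<bullet> i) * G i p)"
    by (intro bounded_linear_sum bounded_linear_mult_const bounded_linear_inner_left)
  fix e :: real assume e: "e > 0"
  define e' where "e' = e / real DIM('a)"
  have e': "e' > 0" using e by (simp add: e'_def)
  have "\<forall>i\<in>Basis. eventually (\<lambda>q. q \<in> U \<and> dist (G i q) (G i p) < e') (nhds p)"
  proof
    fix i :: 'a assume i: "i \<in> Basis"
    have "isCont (G i) p" using C i U continuous_on_eq_continuous_at by blast
    then have "(G i \<longlongrightarrow> G i p) (nhds p)"
      by (simp add: isCont_def tendsto_at_iff_tendsto_nhds)
    then have "eventually (\<lambda>q. dist (G i q) (G i p) < e') (nhds p)"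
      using e' tendsto_iff by blast
    moreover have "eventually (\<lambda>q. q \<in> U) (nhds p)"
      using U eventually_nhds_in_open by blast
    ultimately show "eventually (\<lambda>q. q \<in> U \<and> dist (G i q) (G i p) < e') (nhds p)"
      by (simp add: eventually_conj)
  qed
  then have "eventually (\<lambda>q. \<forall>i\<in>Basis. q \<in> U \<and> dist (G i q) (G i p) < e') (nhds p)"
    by (simp add: eventually_ball_finite)
  then obtain d where d: "d > 0"
    and dP: "\<forall>q. dist q p < d \<longrightarrow> (\<forall>i\<in>Basis. q \<in> U \<and> dist (G i q) (G i p) < e')"
    unfolding eventually_nhds_metric by blast
  have dq: "q \<in> U \<and> (\<forall>i\<in>Basis. \<bar>G i q - G i p\<bar> < e')" if "dist q p < d" for q
  proof -
    have h: "\<forall>i\<in>Basis. q \<in> U \<and> dist (G i q) (G i p) < e'" using dP that by blast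
    obtain i0 :: 'a where "i0 \<in> Basis" using nonempty_Basis by blast
    then show ?thesis using h by (auto simp: dist_real_def)
  qed
  have claim: "B \<subseteq> Basis \<Longrightarrow> \<forall>h. (\<forall>i\<in>Basis-B. h \<bullet> i = 0) \<longrightarrow> norm h < d \<longrightarrow>
     \<bar>g (p + h) - g p - (\<Sum>i\<in>B. (h \<bullet> i) * G i p)\<bar> \<le> e' * (\<Sum>i\<in>B. \<bar>h \<bullet> i\<bar>)" for B
  proof (induction B rule: infinite_finite_induct)
    case (infinite A)
    then show ?case by (meson finite_Basis finite_subset)
  next
    case empty
    then show ?case by (simp add: euclidean_all_zero_iff)
  next
    case (insert b B)
    show ?case
    proof (intro allI impI)
      fix h :: 'a
      assume h0: "\<forall>i\<in>Basis - insert b B. h \<bullet> i = 0" and hd: "norm h < d"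
      have b: "b \<in> Basis" using insert by auto
      define c where "c = h \<bullet> b"
      define h' where "h' = h - c *\<^sub>R b"
      have hb: "h' \<bullet> b = 0" using b by (simp add: h'_def c_def inner_diff_left)
      have h'i: "h' \<bullet> i = h \<bullet> i" if "i \<in> B" for i
      proof -
        have "i \<in> Basis" "i \<noteq> b" using that insert by auto
        then show ?thesis using b inner_not_same_Basis[of b i] by (simp add: h'_def inner_diff_left)
      qed
      have h'0: "\<forall>i\<in>Basis - B. h' \<bullet> i = 0"
      proof
        fix i assume i: "i \<in> Basis - B"
        show "h' \<bullet> i = 0"
        proof (cases "i = b")
          case True then show ?thesis using hb by simp
        next
          case False
          then have "h \<bullet> i = 0" "b \<bullet> i = 0" using h0 i b inner_not_same_Basis[of b i] by auto
          then show ?thesis by (simp add: h'_def inner_diff_left)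
        qed
      qed
      have nrm: "norm (h' + s *\<^sub>R b) \<le> norm h" if "\<bar>s\<bar> \<le> \<bar>c\<bar>" for s
      proof -
        have "(norm (h' + s *\<^sub>R b))^2 = (norm h')^2 + s^2"
          using b hb norm_add_Pythagorean[of h' "s *\<^sub>R b"] by (simp add: orthogonal_def)
        moreover have "(norm h)^2 = (norm h')^2 + c^2"
          using b hb norm_add_Pythagorean[of h' "c *\<^sub>R b"] by (simp add: orthogonal_def h'_def)
        moreover have "s^2 \<le> c^2" using that by (simp add: abs_le_square_iff)
        ultimately have "(norm (h' + s *\<^sub>R b))^2 \<le> (norm h)^2" by simp
        then show ?thesis by (rule power2_le_imp_le) simp
      qed
      have IH: "\<bar>g (p + h') - g p - (\<Sum>i\<in>B. (h' \<bullet> i) * G i p)\<bar> \<le> e' * (\<Sum>i\<in>B. \<bar>h' \<bullet> i\<bar>)"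
        using insert.IH insert.prems h'0 nrm[of 0] hd by auto
      define \<phi> where "\<phi> s = g (p + h' + s *\<^sub>R b) - s * G b p" for s
      define I where "I = {min 0 c .. max 0 c}"
      have "norm (\<phi> c - \<phi> 0) \<le> e' * norm (c - 0)"
      proof (rule field_differentiable_bound[where S = I])
        show "convex I" by (simp add: I_def)
        show "c \<in> I" "0 \<in> I" by (auto simp: I_def)
        fix s assume s: "s \<in> I"
        then have sc: "\<bar>s\<bar> \<le> \<bar>c\<bar>" by (auto simp: I_def)
        have q: "dist (p + h' + s *\<^sub>R b) p < d"
          using nrm[OF sc] hd by (simp add: dist_norm)
        then have qU: "p + h' + s *\<^sub>R b \<in> U" using dq by blast
        have "((\<lambda>t. g (p + h' + t *\<^sub>R b)) has_real_derivative G b (p + h' + s *\<^sub>R b)) (at s)"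
          by (rule partial_shift) (use D b qU in auto)
        then have "(\<phi> has_real_derivative (G b (p + h' + s *\<^sub>R b) - G b p)) (at s)"
          unfolding \<phi>_def by (auto intro!: derivative_eq_intros)
        then show "(\<phi> has_field_derivative (G b (p + h' + s *\<^sub>R b) - G b p)) (at s within I)"
          by (rule has_field_derivative_at_within)
        show "norm (G b (p + h' + s *\<^sub>R b) - G b p) \<le> e'"
          using dq[OF q] b by auto
      qed
      then have mv: "\<bar>g (p + h) - g (p + h') - c * G b p\<bar> \<le> e' * \<bar>c\<bar>"
        by (simp add: \<phi>_def h'_def algebra_simps)
      have sumeq: "(\<Sum>i\<in>insert b B. (h \<bullet> i) * G i p) = c * G b p + (\<Sum>i\<in>B. (h' \<bullet> i) * G i p)"
        using insert h'i by (simp add: c_def)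
      have sumeq2: "(\<Sum>i\<in>insert b B. \<bar>h \<bullet> i\<bar>) = \<bar>c\<bar> + (\<Sum>i\<in>B. \<bar>h' \<bullet> i\<bar>)"
        using insert h'i by (simp add: c_def)
      show "\<bar>g (p + h) - g p - (\<Sum>i\<in>insert b B. (h \<bullet> i) * G i p)\<bar> \<le> e' * (\<Sum>i\<in>insert b B. \<bar>h \<bullet> i\<bar>)"
        unfolding sumeq sumeq2 using IH mv by (simp add: algebra_simps)
    qed
  qed
  show "\<exists>d>0. \<forall>y. norm (y - p) < d \<longrightarrow> norm (g y - g p - (\<Sum>i\<in>Basis. ((y - p) \<bullet> i) * G i p)) \<le> e * norm (y - p)"
  proof (intro exI[of _ d] conjI allI impI)
    fix y assume y: "norm (y - p) < d"
    have "\<bar>g (p + (y - p)) - g p - (\<Sum>i\<in>Basis. ((y - p) \<bullet> i) * G i p)\<bar> \<le> e' * (\<Sum>i\<in>Basis. \<bar>(y - p) \<bullet> i\<bar>)"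
      using claim[of Basis] y by auto
    also have "\<dots> \<le> e' * (\<Sum>i\<in>(Basis::'a set). norm (y - p))"
      using e' by (intro mult_left_mono sum_mono Basis_le_norm) auto
    also have "\<dots> = e * norm (y - p)" using e by (simp add: e'_def)
    finally show "norm (g y - g p - (\<Sum>i\<in>Basis. ((y - p) \<bullet> i) * G i p)) \<le> e * norm (y - p)"
      by simp
  qed (rule d)
qed

lemma C_on_SucD:
  assumes "C_on (Suc m) U g"
  obtains G where "\<forall>i\<in>Basis. (\<forall>q\<in>U. ((\<lambda>t. g (q + t *\<^sub>R i)) has_real_derivative G i q) (at 0)) \<and> C_on m U (G i)"
  using assms by (auto dest!: bchoice)

lemma C_on_1_cont:
  fixes g :: "'a::euclidean_space \<Rightarrow> real"
  assumes U: "open U" and "C_on (Suc 0) U g"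
  shows "continuous_on U g"
proof -
  obtain G where G: "\<forall>i\<in>Basis. (\<forall>q\<in>U. ((\<lambda>t. g (q + t *\<^sub>R i)) has_real_derivative G i q) (at 0)) \<and> C_on 0 U (G i)"
    using C_on_SucD[OF assms(2)] by blast
  show ?thesis
  proof (rule continuous_at_imp_continuous_on, intro ballI)
    fix p assume "p \<in> U"
    have "(g has_derivative (\<lambda>v. \<Sum>i\<in>Basis. (v \<bullet> i) * G i p)) (at p)"
      by (rule partials_imp_derivative[OF U \<open>p \<in> U\<close>]) (use G in auto)
    then show "isCont g p" by (rule has_derivative_continuous)
  qed
qed

lemma C_on_Suc_imp:
  fixes g :: "'a::euclidean_space \<Rightarrow> real"
  assumes "open U"
  shows "C_on (Suc m) U g \<Longrightarrow> C_on m U g"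
proof (induction m arbitrary: g)
  case 0
  then show ?case using C_on_1_cont[OF assms] by simp
next
  case (Suc m)
  have "\<forall>i\<in>Basis. \<exists>g'. (\<forall>x\<in>U. ((\<lambda>t. g (x + t *\<^sub>R i)) has_real_derivative g' x) (at 0)) \<and> C_on (Suc m) U g'"
    using Suc.prems unfolding C_on.simps(2)[of "Suc m" U g] .
  then have "\<forall>i\<in>Basis. \<exists>g'. (\<forall>x\<in>U. ((\<lambda>t. g (x + t *\<^sub>R i)) has_real_derivative g' x) (at 0)) \<and> C_on m U g'"
    using Suc.IH by blast
  then show ?case unfolding C_on.simps(2)[of m U g] .
qed

lemma C_on_le:
  fixes g :: "'a::euclidean_space \<Rightarrow> real"
  assumes "open U" "m \<le> n" "C_on n U g"
  shows "C_on m U g"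
  using assms(2,3)
proof (induction rule: dec_induct)
  case base then show ?case .
next
  case (step k) then show ?case using C_on_Suc_imp[OF assms(1)] by blast
qed

lemma C_on_cont:
  fixes g :: "'a::euclidean_space \<Rightarrow> real"
  assumes "open U" "C_on m U g"
  shows "continuous_on U g"
  using C_on_le[OF assms(1) _ assms(2), of 0] by simp

lemma C_on_const: "C_on m U (\<lambda>x. c)"
proof (induction m arbitrary: c)
  case 0 then show ?case by simp
next
  case (Suc m) then show ?case by (auto intro!: exI[of _ "\<lambda>x. 0"])
qed

lemma C_on_add:
  "C_on m U g \<Longrightarrow> C_on m U h \<Longrightarrow> C_on m U (\<lambda>x. g x + h x)"
proof (induction m arbitrary: g h)
  case 0 then show ?case by (simp add: continuous_on_add)
next
  case (Suc m)
  show ?case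
  proof (simp only: C_on.simps, intro ballI)
    fix i :: 'a assume i: "i \<in> Basis"
    obtain g' where g': "\<forall>x\<in>U. ((\<lambda>t. g (x + t *\<^sub>R i)) has_real_derivative g' x) (at 0)" "C_on m U g'"
      using Suc.prems(1) i by auto
    obtain h' where h': "\<forall>x\<in>U. ((\<lambda>t. h (x + t *\<^sub>R i)) has_real_derivative h' x) (at 0)" "C_on m U h'"
      using Suc.prems(2) i by auto
    show "\<exists>G. (\<forall>x\<in>U. ((\<lambda>t. g (x + t *\<^sub>R i) + h (x + t *\<^sub>R i)) has_real_derivative G x) (at 0)) \<and> C_on m U G"
      using g' h' Suc.IH by (intro exI[of _ "\<lambda>x. g' x + h' x"]) (auto intro!: derivative_eq_intros)
  qed
qed

lemma C_on_sum:
  "finite A \<Longrightarrow> (\<And>a. a \<in> A \<Longrightarrow> C_on m U (f a)) \<Longrightarrow> C_on m U (\<lambda>x. \<Sum>a\<in>A. f a x)"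
proof (induction A rule: finite_induct)
  case empty then show ?case by (simp add: C_on_const)
next
  case (insert a A) then show ?case by (simp add: C_on_add)
qed

lemma C_on_mult:
  fixes g :: "'a::euclidean_space \<Rightarrow> real"
  assumes U: "open U"
  shows "C_on m U g \<Longrightarrow> C_on m U h \<Longrightarrow> C_on m U (\<lambda>x. g x * h x)"
proof (induction m arbitrary: g h)
  case 0 then show ?case by (simp add: continuous_on_mult)
next
  case (Suc m)
  have gm: "C_on m U g" and hm: "C_on m U h" using Suc.prems C_on_Suc_imp[OF U] by blast+
  show ?case
  proof (simp only: C_on.simps, intro ballI)
    fix i :: 'a assume i: "i \<in> Basis"
    obtain g' where g': "\<forall>x\<in>U. ((\<lambda>t. g (x + t *\<^sub>R i)) has_real_derivative g' x) (at 0)" "C_on m U g'"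
      using Suc.prems(1) i by auto
    obtain h' where h': "\<forall>x\<in>U. ((\<lambda>t. h (x + t *\<^sub>R i)) has_real_derivative h' x) (at 0)" "C_on m U h'"
      using Suc.prems(2) i by auto
    have "C_on m U (\<lambda>x. g' x * h x + h' x * g x)"
      using Suc.IH g'(2) h'(2) gm hm by (intro C_on_add) auto
    moreover have "((\<lambda>t. g (x + t *\<^sub>R i) * h (x + t *\<^sub>R i)) has_real_derivative g' x * h x + h' x * g x) (at 0)"
      if "x \<in> U" for x
      using DERIV_mult[OF g'(1)[rule_format, OF that] h'(1)[rule_format, OF that]] by simp
    ultimately show "\<exists>G. (\<forall>x\<in>U. ((\<lambda>t. g (x + t *\<^sub>R i) * h (x + t *\<^sub>R i)) has_real_derivative G x) (at 0)) \<and> C_on m U G"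
      by (intro exI[of _ "\<lambda>x. g' x * h x + h' x * g x"] conjI ballI) auto
  qed
qed

lemma C_on_cmult:
  fixes g :: "'a::euclidean_space \<Rightarrow> real"
  assumes "open U" "C_on m U g"
  shows "C_on m U (\<lambda>x. c * g x)"
  using C_on_mult[OF assms(1) C_on_const assms(2)] .

lemma C_on_derivative:
  fixes g :: "'a::euclidean_space \<Rightarrow> real"
  assumes U: "open U" and g: "C_on (Suc m) U g"
  obtains G where "\<forall>i\<in>Basis. (\<forall>q\<in>U. ((\<lambda>t. g (q + t *\<^sub>R i)) has_real_derivative G i q) (at 0)) \<and> C_on m U (G i)"
    "\<forall>p\<in>U. (g has_derivative (\<lambda>v. \<Sum>i\<in>Basis. (v \<bullet> i) * G i p)) (at p)"
proof -
  obtain G where G: "\<forall>i\<in>Basis. (\<forall>q\<in>U. ((\<lambda>t. g (q + t *\<^sub>R i)) has_real_derivative G i q) (at 0)) \<and> C_on m U (G i)"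
    using C_on_SucD[OF g] by blast
  moreover have "\<forall>p\<in>U. (g has_derivative (\<lambda>v. \<Sum>i\<in>Basis. (v \<bullet> i) * G i p)) (at p)"
    using G by (auto intro!: partials_imp_derivative[OF U] C_on_cont[OF U])
  ultimately show ?thesis using that by blast
qed

lemma C_on_compose:
  fixes f :: "'a::euclidean_space \<Rightarrow> real" and x :: "'c::euclidean_space \<Rightarrow> 'a"
  assumes W: "open W"
  shows "C_on m UNIV f \<Longrightarrow> (\<forall>j\<in>Basis. C_on m W (\<lambda>p. x p \<bullet> j)) \<Longrightarrow> C_on m W (\<lambda>p. f (x p))"
proof (induction m arbitrary: f)
  case 0
  have "continuous_on W (\<lambda>p. \<Sum>j\<in>Basis. (x p \<bullet> j) *\<^sub>R j)"
    using 0 by (intro continuous_on_sum continuous_on_scaleR) auto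
  then have "continuous_on W x" by (simp add: euclidean_representation)
  then show ?case using 0 by (auto intro: continuous_on_compose2)
next
  case (Suc m)
  obtain F where F: "\<forall>j\<in>Basis. (\<forall>q\<in>UNIV. ((\<lambda>t. f (q + t *\<^sub>R j)) has_real_derivative F j q) (at 0)) \<and> C_on m UNIV (F j)"
    "\<forall>p\<in>UNIV. (f has_derivative (\<lambda>v. \<Sum>j\<in>Basis. (v \<bullet> j) * F j p)) (at p)"
    using C_on_derivative[OF open_UNIV Suc.prems(1)] by blast
  have xm: "\<forall>j\<in>Basis. C_on m W (\<lambda>p. x p \<bullet> j)"
    using Suc.prems(2) C_on_Suc_imp[OF W] by blast
  show ?case
  proof (simp only: C_on.simps, intro ballI)
    fix i :: 'c assume i: "i \<in> Basis"
    have "\<forall>j\<in>Basis. \<exists>X. (\<forall>q\<in>W. ((\<lambda>t. x (q + t *\<^sub>R i) \<bullet> j) has_real_derivative X q) (at 0)) \<and> C_on m W X"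
      using Suc.prems(2) i by auto
    then obtain X where X: "\<forall>j\<in>Basis. (\<forall>q\<in>W. ((\<lambda>t. x (q + t *\<^sub>R i) \<bullet> j) has_real_derivative X j q) (at 0)) \<and> C_on m W (X j)"
      by (auto dest!: bchoice)
    have "C_on m W (\<lambda>q. \<Sum>j\<in>Basis. F j (x q) * X j q)"
      using F(1) X xm by (intro C_on_sum C_on_mult[OF W] Suc.IH) auto
    moreover have "((\<lambda>t. f (x (q + t *\<^sub>R i))) has_real_derivative (\<Sum>j\<in>Basis. F j (x q) * X j q)) (at 0)"
      if q: "q \<in> W" for q
    proof -
      define v where "v = (\<Sum>j\<in>Basis. X j q *\<^sub>R j)"
      have vj: "v \<bullet> j = X j q" if "j \<in> Basis" for j
        using that by (simp add: v_def inner_sum_left_Basis)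
      have "((\<lambda>t. x (q + t *\<^sub>R i)) has_derivative (\<lambda>t. t *\<^sub>R v)) (at 0)"
      proof (rule iffD2[OF has_derivative_componentwise_within], intro ballI)
        fix j :: 'a assume j: "j \<in> Basis"
        have "((\<lambda>t. x (q + t *\<^sub>R i) \<bullet> j) has_real_derivative X j q) (at 0)" using X j q by auto
        then have d1: "((\<lambda>t. x (q + t *\<^sub>R i) \<bullet> j) has_derivative (*) (X j q)) (at 0)"
          unfolding has_field_derivative_def .
        have "(\<lambda>t. t *\<^sub>R v \<bullet> j) = (*) (X j q)"
          using vj[OF j] by (auto simp: fun_eq_iff)
        then show "((\<lambda>t. x (q + t *\<^sub>R i) \<bullet> j) has_derivative (\<lambda>t. t *\<^sub>R v \<bullet> j)) (at 0)"
          using d1 by (simp only:)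
      qed
      moreover have "(f has_derivative (\<lambda>w. \<Sum>j\<in>Basis. (w \<bullet> j) * F j (x q))) (at (x (q + 0 *\<^sub>R i)))"
        using F(2) by simp
      ultimately have "((f \<circ> (\<lambda>t. x (q + t *\<^sub>R i))) has_derivative ((\<lambda>w. \<Sum>j\<in>Basis. (w \<bullet> j) * F j (x q)) \<circ> (\<lambda>t. t *\<^sub>R v))) (at 0)"
        by (rule diff_chain_at)
      moreover have "((\<lambda>w. \<Sum>j\<in>Basis. (w \<bullet> j) * F j (x q)) \<circ> (\<lambda>t. t *\<^sub>R v)) = (\<lambda>t. (\<Sum>j\<in>Basis. F j (x q) * X j q) * t)"
        by (auto simp: vj sum_distrib_left sum_distrib_right mult.commute mult.left_commute intro!: sum.cong)
      ultimately have "((f \<circ> (\<lambda>t. x (q + t *\<^sub>R i))) has_derivative (\<lambda>t. (\<Sum>j\<in>Basis. F j (x q) * X j q) * t)) (at 0)"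
        by (simp only:)
      then show ?thesis unfolding has_field_derivative_def o_def .
    qed
    ultimately show "\<exists>G. (\<forall>q\<in>W. ((\<lambda>t. f (x (q + t *\<^sub>R i))) has_real_derivative G q) (at 0)) \<and> C_on m W G"
      by (intro exI[of _ "\<lambda>q. \<Sum>j\<in>Basis. F j (x q) * X j q"] conjI ballI) auto
  qed
qed

lemma e_in_Basis: "(1::real, 0::'b::euclidean_space) \<in> Basis"
  by (simp add: Basis_prod_def)

lemma e_shift:
  fixes h :: "real \<times> 'b::euclidean_space \<Rightarrow> real"
  assumes "((\<lambda>u. h ((s, x0) + u *\<^sub>R (1, 0))) has_real_derivative D) (at 0)"
  shows "((\<lambda>s. h (s, x0)) has_real_derivative D) (at s)"
proof -
  have "((\<lambda>u. h (u + s, x0)) has_real_derivative D) (at 0)"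
    using assms by (simp add: add.commute)
  then show ?thesis using DERIV_shift[of "\<lambda>s. h (s, x0)" D 0 s] by simp
qed

lemma iter_derivs:
  fixes g :: "'c::euclidean_space \<Rightarrow> real"
  assumes W: "open W" and e: "e \<in> Basis"
  shows "C_on n W g \<Longrightarrow> \<exists>D. D 0 = g \<and>
     (\<forall>j<n. \<forall>q\<in>W. ((\<lambda>s. D j (q + s *\<^sub>R e)) has_real_derivative D (Suc j) q) (at 0)) \<and>
     (\<forall>j\<le>n. C_on (n - j) W (D j))"
proof (induction n arbitrary: g)
  case 0 then show ?case by (intro exI[of _ "\<lambda>_. g"]) auto
next
  case (Suc n)
  obtain G where G: "\<forall>q\<in>W. ((\<lambda>t. g (q + t *\<^sub>R e)) has_real_derivative G q) (at 0)" "C_on n W G"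
    using Suc.prems e by auto
  obtain D where D: "D 0 = G" "\<forall>j<n. \<forall>q\<in>W. ((\<lambda>s. D j (q + s *\<^sub>R e)) has_real_derivative D (Suc j) q) (at 0)"
    "\<forall>j\<le>n. C_on (n - j) W (D j)"
    using Suc.IH[OF G(2)] by blast
  define D' where "D' = case_nat g D"
  have "D' 0 = g" by (simp add: D'_def)
  moreover have "\<forall>j<Suc n. \<forall>q\<in>W. ((\<lambda>s. D' j (q + s *\<^sub>R e)) has_real_derivative D' (Suc j) q) (at 0)"
  proof (intro allI impI ballI)
    fix j q assume j: "j < Suc n" and q: "q \<in> W"
    show "((\<lambda>s. D' j (q + s *\<^sub>R e)) has_real_derivative D' (Suc j) q) (at 0)"
    proof (cases j)
      case 0 then show ?thesis using G(1) q D(1) by (simp add: D'_def)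
    next
      case (Suc j') then show ?thesis using D(2) j q by (simp add: D'_def)
    qed
  qed
  moreover have "\<forall>j\<le>Suc n. C_on (Suc n - j) W (D' j)"
  proof (intro allI impI)
    fix j assume j: "j \<le> Suc n"
    show "C_on (Suc n - j) W (D' j)"
    proof (cases j)
      case 0 then show ?thesis using Suc.prems by (simp add: D'_def)
    next
      case (Suc j') then show ?thesis using D(3) j by (simp add: D'_def)
    qed
  qed
  ultimately show ?case by blast
qed

lemma poly_small:
  "((\<lambda>t. (\<Sum>m\<le>n. d m * t ^ m) / t ^ n) \<longlongrightarrow> 0) (at_right (0::real)) \<Longrightarrow> \<forall>m\<le>n. d m = 0"
proof (induction n arbitrary: d)
  case 0
  then have "((\<lambda>t. d 0) \<longlongrightarrow> 0) (at_right (0::real))" by simp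
  then have "d 0 = 0" using tendsto_const_iff trivial_limit_at_right_real by blast
  then show ?case by simp
next
  case (Suc n)
  let ?q = "\<lambda>t::real. \<Sum>m\<le>Suc n. d m * t ^ m"
  have "((\<lambda>t. ?q t / t ^ Suc n * t ^ Suc n) \<longlongrightarrow> 0 * 0 ^ Suc n) (at_right 0)"
    by (intro tendsto_mult Suc.prems tendsto_intros)
  then have "((\<lambda>t. ?q t / t ^ Suc n * t ^ Suc n) \<longlongrightarrow> 0) (at_right 0)" by simp
  then have l1: "(?q \<longlongrightarrow> 0) (at_right 0)"
    by (rule Lim_transform_eventually) (rule eventually_mono[OF eventually_at_right_less], simp)
  have "(?q \<longlongrightarrow> ?q 0) (at_right 0)"
    by (intro tendsto_intros)
  then have "?q 0 = 0" using l1 tendsto_unique trivial_limit_at_right_real by blast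
  then have d0: "d 0 = 0" by (simp add: sum.atMost_Suc_shift)
  have "((\<lambda>t. (\<Sum>m\<le>n. d (Suc m) * t ^ m) / t ^ n) \<longlongrightarrow> 0) (at_right (0::real))"
  proof (rule Lim_transform_eventually[OF Suc.prems])
    show "\<forall>\<^sub>F t in at_right 0. ?q t / t ^ Suc n = (\<Sum>m\<le>n. d (Suc m) * t ^ m) / t ^ n"
    proof (rule eventually_mono[OF eventually_at_right_less])
      fix t :: real assume "0 < t"
      then have t: "t \<noteq> 0" by simp
      have "?q t = t * (\<Sum>m\<le>n. d (Suc m) * t ^ m)"
        by (simp only: sum.atMost_Suc_shift) (simp add: d0 sum_distrib_left mult.assoc mult.left_commute del: sum.atMost_Suc)
      then show "?q t / t ^ Suc n = (\<Sum>m\<le>n. d (Suc m) * t ^ m) / t ^ n"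
        using t by simp
    qed
  qed
  then have "\<forall>m\<le>n. d (Suc m) = 0" by (rule Suc.IH)
  then show ?case using d0
  proof (intro allI impI)
    fix m assume m: "m \<le> Suc n" and h: "\<forall>m\<le>n. d (Suc m) = 0"
    show "d m = 0"
    proof (cases m)
      case 0 then show ?thesis using d0 by simp
    next
      case (Suc m') then show ?thesis using h m by simp
    qed
  qed
qed

lemma core:
  fixes f :: "'a::euclidean_space \<Rightarrow> real" and x :: "real \<Rightarrow> 'b::euclidean_space \<Rightarrow> 'a"
    and a :: "'b \<Rightarrow> real"
  assumes k: "k \<ge> 1"
  and f_C: "C_on (2*k+1) UNIV f" and f0: "f 0 = 0"
  and S: "compact S" and eps: "\<epsilon> > 0"
  and W: "open W" and KW: "{0..\<epsilon>} \<times> S \<subseteq> W" and xC: "C_vec_on (2*k+1) W (\<lambda>p. x (fst p) (snd p))"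
  and x00: "\<forall>x0\<in>S. x 0 x0 = 0"
  and I3: "\<forall>\<delta>. 0 < \<delta> \<and> \<delta> \<le> \<epsilon> \<longrightarrow> (\<exists>U. open U \<and> 0 \<in> U \<and> (\<forall>y\<in>U. \<exists>x0\<in>S. \<exists>t\<in>{0..\<delta>}. y = x t x0))"
  and ac: "\<forall>x0\<in>S. (\<lambda>t. f (x t x0) - a x0 * t ^ (2*k)) \<in> o[at_right 0](\<lambda>t. t ^ (2*k))"
  and pos: "\<forall>x0\<in>S. a x0 > 0"
  shows "\<exists>c>0. \<exists>U. open U \<and> 0 \<in> U \<and> (\<forall>y\<in>U. f y \<ge> c * norm y ^ (2*k))"
proof -
  define N where "N = 2*k+1"
  define X where "X = (\<lambda>p::real\<times>'b. x (fst p) (snd p))"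
  define K where "K = {0..\<epsilon>} \<times> S"
  have Kc: "compact K" using S by (simp add: K_def compact_Times)
  have KW': "K \<subseteq> W" using KW by (simp add: K_def)
  obtain U0 where "open U0" "0 \<in> U0" "\<forall>y\<in>U0. \<exists>x0\<in>S. \<exists>t\<in>{0..\<epsilon>}. y = x t x0"
    using I3 eps by auto
  then have Sne: "S \<noteq> {}" by blast
  have xcomp: "\<forall>j\<in>Basis. C_on N W (\<lambda>p. X p \<bullet> j)"
    using xC by (simp add: C_vec_on_def X_def N_def)
  have gC: "C_on N W (\<lambda>p. f (X p))"
    by (rule C_on_compose[OF W]) (use f_C xcomp N_def in auto)
  define e where "e = (1::real, 0::'b)"
  have e: "e \<in> Basis" by (simp add: e_def e_in_Basis)
  obtain D where D0: "D 0 = (\<lambda>p. f (X p))"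
    and Dd: "\<forall>j<N. \<forall>q\<in>W. ((\<lambda>s. D j (q + s *\<^sub>R e)) has_real_derivative D (Suc j) q) (at 0)"
    and DC: "\<forall>j\<le>N. C_on (N - j) W (D j)"
    using iter_derivs[OF W e gC] by blast
  have Dcont: "continuous_on W (D j)" if "j \<le> N" for j
    using DC that C_on_cont[OF W] by blast
  have Dline: "((\<lambda>s. D j (s, x0)) has_real_derivative D (Suc j) (s, x0)) (at s)"
    if "j < N" "(s, x0) \<in> W" for j s x0
  proof (rule e_shift)
    show "((\<lambda>u. D j ((s, x0) + u *\<^sub>R (1, 0))) has_real_derivative D (Suc j) (s, x0)) (at 0)"
      using Dd[rule_format, OF that(1) that(2)] unfolding e_def .
  qed
  have "bounded (D N ` K)"
    using Kc continuous_on_subset[OF Dcont[of N] KW'] by (intro compact_imp_bounded compact_continuous_image) auto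
  then obtain B where "\<forall>y\<in>D N ` K. norm y \<le> B" unfolding bounded_iff by blast
  then have B: "\<forall>p\<in>K. \<bar>D N p\<bar> \<le> \<bar>B\<bar>" by force
  define C where "C = \<bar>B\<bar> / fact N"
  have C0: "C \<ge> 0" by (simp add: C_def)
  have taylor: "\<bar>f (x t x0) - (\<Sum>m<N. D m (0, x0) / fact m * t ^ m)\<bar> \<le> C * t ^ N"
    if x0: "x0 \<in> S" and t: "0 < t" "t \<le> \<epsilon>" for x0 t
  proof -
    have "\<exists>\<xi>. 0 < \<xi> \<and> \<xi> < t \<and> (\<lambda>s. D 0 (s, x0)) t = (\<Sum>m<N. D m (0, x0) / fact m * t ^ m) + D N (\<xi>, x0) / fact N * t ^ N"
    proof (rule Maclaurin[where diff = "\<lambda>m s. D m (s, x0)"])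
      show "0 < t" by fact
      show "0 < N" by (simp add: N_def)
      show "\<forall>m s. m < N \<and> 0 \<le> s \<and> s \<le> t \<longrightarrow> ((\<lambda>s. D m (s, x0)) has_real_derivative D (Suc m) (s, x0)) (at s)"
        using KW x0 t by (auto intro!: Dline)
    qed simp
    then obtain \<xi> where \<xi>: "0 < \<xi>" "\<xi> < t"
      and eq: "f (x t x0) = (\<Sum>m<N. D m (0, x0) / fact m * t ^ m) + D N (\<xi>, x0) / fact N * t ^ N"
      using D0 by (auto simp: X_def)
    have "(\<xi>, x0) \<in> K" using \<xi> t x0 by (simp add: K_def)
    then have "\<bar>D N (\<xi>, x0)\<bar> \<le> \<bar>B\<bar>" using B by blast
    then have "\<bar>D N (\<xi>, x0) / fact N * t ^ N\<bar> \<le> \<bar>B\<bar> / fact N * t ^ N"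
      using t by (simp add: abs_mult divide_right_mono mult_right_mono)
    then show ?thesis using eq by (simp add: C_def)
  qed
  have coeff: "a x0 = D (2*k) (0, x0) / fact (2*k) \<and>
      (\<forall>t. 0 < t \<and> t \<le> \<epsilon> \<longrightarrow> \<bar>f (x t x0) - a x0 * t ^ (2*k)\<bar> \<le> C * t ^ N)"
    if x0: "x0 \<in> S" for x0
  proof -
    define dd where "dd m = D m (0, x0) / fact m - (if m = 2*k then a x0 else 0)" for m
    have seteq: "{..<N} = {..2*k}" by (auto simp: N_def)
    have sumdd: "(\<Sum>m\<le>2*k. dd m * t ^ m) = (\<Sum>m<N. D m (0, x0) / fact m * t ^ m) - a x0 * t ^ (2*k)" for t :: real
    proof -
      have "(\<Sum>m\<le>2*k. dd m * t ^ m) = (\<Sum>m\<le>2*k. D m (0, x0) / fact m * t ^ m) - (\<Sum>m\<le>2*k. (if m = 2*k then a x0 else 0) * t ^ m)"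
        by (simp add: dd_def left_diff_distrib sum_subtractf)
      also have "(\<Sum>m\<le>2*k. (if m = 2*k then a x0 else 0) * t ^ m) = a x0 * t ^ (2*k)"
      proof -
        have "(\<Sum>m\<le>2*k. (if m = 2*k then a x0 else 0) * t ^ m) = (\<Sum>m\<le>2*k. if m = 2*k then a x0 * t ^ m else 0)"
          by (intro sum.cong) auto
        also have "\<dots> = a x0 * t ^ (2*k)" by (subst sum.delta) simp_all
        finally show ?thesis .
      qed
      finally show ?thesis using seteq by (simp only:)
    qed
    have l1: "((\<lambda>t. (f (x t x0) - a x0 * t ^ (2*k)) / t ^ (2*k)) \<longlongrightarrow> 0) (at_right 0)"
      using ac x0 smalloD_tendsto by blast
    define R where "R t = f (x t x0) - (\<Sum>m<N. D m (0, x0) / fact m * t ^ m)" for t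
    have l2: "((\<lambda>t. R t / t ^ (2*k)) \<longlongrightarrow> 0) (at_right 0)"
    proof (rule Lim_null_comparison)
      show "((\<lambda>t. C * t) \<longlongrightarrow> 0) (at_right 0)"
        by (auto intro!: tendsto_eq_intros)
      show "\<forall>\<^sub>F t in at_right 0. norm (R t / t ^ (2*k)) \<le> C * t"
        using eventually_at_right_real[OF eps]
      proof (rule eventually_mono)
        fix t assume "t \<in> {0<..<\<epsilon>}"
        then have t: "0 < t" "t \<le> \<epsilon>" by auto
        have "\<bar>R t\<bar> \<le> C * t ^ N" using taylor[OF x0 t] by (simp add: R_def)
        then have "\<bar>R t\<bar> / t ^ (2*k) \<le> C * t ^ N / t ^ (2*k)"
          using t by (simp add: divide_right_mono)
        also have "C * t ^ N / t ^ (2*k) = C * t" using t by (simp add: N_def)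
        finally show "norm (R t / t ^ (2*k)) \<le> C * t" by (simp add: abs_divide)
      qed
    qed
    have "((\<lambda>t. (f (x t x0) - a x0 * t ^ (2*k)) / t ^ (2*k) - R t / t ^ (2*k)) \<longlongrightarrow> 0 - 0) (at_right 0)"
      by (intro tendsto_diff l1 l2)
    moreover have "(f (x t x0) - a x0 * t ^ (2*k)) / t ^ (2*k) - R t / t ^ (2*k) = (\<Sum>m\<le>2*k. dd m * t ^ m) / t ^ (2*k)" for t
      by (simp add: sumdd R_def diff_divide_distrib)
    ultimately have "((\<lambda>t. (\<Sum>m\<le>2*k. dd m * t ^ m) / t ^ (2*k)) \<longlongrightarrow> 0) (at_right 0)" by simp
    then have dd0: "\<forall>m\<le>2*k. dd m = 0" by (rule poly_small)
    have P: "(\<Sum>m<N. D m (0, x0) / fact m * t ^ m) = a x0 * t ^ (2*k)" for t :: real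
      using sumdd[of t] dd0 by simp
    have "dd (2*k) = 0" using dd0 by simp
    then have "a x0 = D (2*k) (0, x0) / fact (2*k)" by (simp add: dd_def)
    moreover have "\<forall>t. 0 < t \<and> t \<le> \<epsilon> \<longrightarrow> \<bar>f (x t x0) - a x0 * t ^ (2*k)\<bar> \<le> C * t ^ N"
      using taylor[OF x0] P by auto
    ultimately show ?thesis by blast
  qed
  have "continuous_on S (\<lambda>x0. D (2*k) (0, x0) / fact (2*k))"
  proof -
    have "continuous_on ((\<lambda>x0. (0::real, x0)) ` S) (D (2*k))"
    proof (rule continuous_on_subset[of W])
      show "continuous_on W (D (2*k))" using Dcont[of "2*k"] by (simp add: N_def)
      show "(\<lambda>x0. (0::real, x0)) ` S \<subseteq> W" using KW eps by auto
    qed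
    then have "continuous_on S (\<lambda>x0. D (2*k) (0, x0))"
      by (rule continuous_on_compose2[OF _ continuous_on_Pair[OF continuous_on_const continuous_on_id]]) auto
    then show ?thesis by (intro continuous_intros) auto
  qed
  then have "continuous_on S a" using coeff by (auto intro: continuous_on_cong[THEN iffD1])
  then obtain x1 where x1: "x1 \<in> S" "\<forall>y\<in>S. a x1 \<le> a y"
    using continuous_attains_inf[OF S Sne] by blast
  define amin where "amin = a x1"
  have amin: "amin > 0" using pos x1 by (simp add: amin_def)
  have "\<forall>j\<in>Basis. \<exists>G. (\<forall>q\<in>W. ((\<lambda>s. X (q + s *\<^sub>R e) \<bullet> j) has_real_derivative G q) (at 0)) \<and> C_on (2*k) W G"
  proof
    fix j :: 'a assume j: "j \<in> Basis"
    have "C_on (Suc (2*k)) W (\<lambda>p. X p \<bullet> j)" using xcomp j by (simp add: N_def)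
    then show "\<exists>G. (\<forall>q\<in>W. ((\<lambda>s. X (q + s *\<^sub>R e) \<bullet> j) has_real_derivative G q) (at 0)) \<and> C_on (2*k) W G"
      using e by (simp only: C_on.simps)
  qed
  then obtain Xd where Xd: "\<forall>j\<in>Basis. (\<forall>q\<in>W. ((\<lambda>s. X (q + s *\<^sub>R e) \<bullet> j) has_real_derivative Xd j q) (at 0)) \<and> C_on (2*k) W (Xd j)"
    by (auto dest!: bchoice)
  have "continuous_on W (\<lambda>p. \<Sum>j\<in>Basis. \<bar>Xd j p\<bar>)"
    using Xd C_on_cont[OF W] by (intro continuous_intros) blast
  then have "bounded ((\<lambda>p. \<Sum>j\<in>Basis. \<bar>Xd j p\<bar>) ` K)"
    using Kc continuous_on_subset[OF _ KW'] by (intro compact_imp_bounded compact_continuous_image) auto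
  then obtain M0 where "\<forall>y\<in>(\<lambda>p. \<Sum>j\<in>Basis. \<bar>Xd j p\<bar>) ` K. norm y \<le> M0" unfolding bounded_iff by blast
  then have M0: "\<forall>p\<in>K. (\<Sum>j\<in>Basis. \<bar>Xd j p\<bar>) \<le> M0" by force
  have Xdb: "\<bar>Xd j p\<bar> \<le> \<bar>M0\<bar>" if "j \<in> Basis" "p \<in> K" for j p
  proof -
    have "\<bar>Xd j p\<bar> \<le> (\<Sum>j\<in>Basis. \<bar>Xd j p\<bar>)"
      using that by (intro member_le_sum) auto
    then show ?thesis using M0 that by force
  qed
  define M where "M = real DIM('a) * \<bar>M0\<bar> + 1"
  have M: "M > 0" by (simp add: M_def add_nonneg_pos)
  have normb: "norm (x t x0) \<le> M * t" if x0: "x0 \<in> S" and t: "0 \<le> t" "t \<le> \<epsilon>" for x0 t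
  proof -
    have comp: "\<bar>x t x0 \<bullet> j\<bar> \<le> \<bar>M0\<bar> * t" if j: "j \<in> Basis" for j
    proof -
      have "norm ((\<lambda>s. x s x0 \<bullet> j) t - (\<lambda>s. x s x0 \<bullet> j) 0) \<le> \<bar>M0\<bar> * norm (t - 0)"
      proof (rule field_differentiable_bound[where S = "{0..t}" and f' = "\<lambda>s. Xd j (s, x0)"])
        fix s assume s: "s \<in> {0..t}"
        then have sK: "(s, x0) \<in> K" using t x0 by (auto simp: K_def)
        have "((\<lambda>s. X (s, x0) \<bullet> j) has_real_derivative Xd j (s, x0)) (at s)"
        proof (rule e_shift)
          show "((\<lambda>u. X ((s, x0) + u *\<^sub>R (1, 0)) \<bullet> j) has_real_derivative Xd j (s, x0)) (at 0)"
          proof -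
            have "(s, x0) \<in> W" using sK KW' by blast
            then show ?thesis using Xd j unfolding e_def by blast
          qed
        qed
        then show "((\<lambda>s. x s x0 \<bullet> j) has_field_derivative Xd j (s, x0)) (at s within {0..t})"
          by (simp add: X_def has_field_derivative_at_within)
        show "norm (Xd j (s, x0)) \<le> \<bar>M0\<bar>" using Xdb[OF j sK] by simp
      qed (use t in auto)
      then show ?thesis using x00 x0 t by simp
    qed
    have "norm (x t x0) \<le> (\<Sum>j\<in>Basis. \<bar>x t x0 \<bullet> j\<bar>)" by (rule norm_le_l1)
    also have "\<dots> \<le> (\<Sum>j\<in>(Basis::'a set). \<bar>M0\<bar> * t)" by (intro sum_mono comp)
    also have "\<dots> = real DIM('a) * \<bar>M0\<bar> * t" by simp
    also have "\<dots> \<le> M * t" using t by (simp add: M_def mult_right_mono)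
    finally show ?thesis .
  qed
  define \<delta> where "\<delta> = min \<epsilon> (amin / (2 * (C + 1)))"
  have \<delta>: "0 < \<delta>" "\<delta> \<le> \<epsilon>" using eps amin C0 by (auto simp: \<delta>_def)
  obtain U where U: "open U" "0 \<in> U" "\<forall>y\<in>U. \<exists>x0\<in>S. \<exists>t\<in>{0..\<delta>}. y = x t x0"
    using I3 \<delta> by blast
  define c where "c = amin / 2 / M ^ (2*k)"
  have c: "c > 0" using amin M by (simp add: c_def)
  show ?thesis
  proof (intro exI[of _ c] conjI exI[of _ U] ballI)
    fix y assume "y \<in> U"
    then obtain x0 t where x0: "x0 \<in> S" and tI: "t \<in> {0..\<delta>}" and y: "y = x t x0"
      using U(3) by blast
    from tI have t: "0 \<le> t" "t \<le> \<delta>" by auto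
    show "c * norm y ^ (2*k) \<le> f y"
    proof (cases "t = 0")
      case True
      have y0: "y = 0" using y x00 x0 True by simp
      have z: "(0::real) ^ (2*k) = 0" using k by (intro zero_power) simp
      show ?thesis using y0 f0 by (simp only: z norm_zero mult_zero_right order_refl)
    next
      case False
      then have t0: "0 < t" using t by simp
      have te: "t \<le> \<epsilon>" using t \<delta> by simp
      have fb: "\<bar>f y - a x0 * t ^ (2*k)\<bar> \<le> C * t ^ N" using coeff[OF x0] t0 te y by blast
      have "C * t \<le> C * (amin / (2 * (C + 1)))"
        using t C0 by (intro mult_left_mono) (auto simp: \<delta>_def)
      also have "\<dots> \<le> amin / 2" using C0 amin by (simp add: field_simps)
      finally have Ct: "C * t \<le> amin / 2" .
      have "amin \<le> a x0" using x1 x0 by (simp add: amin_def)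
      have "amin / 2 * t ^ (2*k) = amin * t ^ (2*k) - amin / 2 * t ^ (2*k)" by simp
      also have "\<dots> \<le> a x0 * t ^ (2*k) - C * t * t ^ (2*k)"
        using \<open>amin \<le> a x0\<close> Ct t0 by (intro diff_mono mult_right_mono) auto
      also have "C * t * t ^ (2*k) = C * t ^ N" by (simp add: N_def)
      also have "a x0 * t ^ (2*k) - C * t ^ N \<le> f y" using fb by linarith
      finally have f1: "amin / 2 * t ^ (2*k) \<le> f y" .
      have "norm y ^ (2*k) \<le> (M * t) ^ (2*k)"
        using normb[OF x0 t(1) te] y by (intro power_mono) auto
      then have "c * norm y ^ (2*k) \<le> c * (M * t) ^ (2*k)" using c by (intro mult_left_mono) auto
      also have "c * (M * t) ^ (2*k) = amin / 2 * t ^ (2*k)" using M by (simp add: c_def power_mult_distrib)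
      finally show ?thesis using f1 by linarith
    qed
  qed (use c U in auto)
qed

lemma pos_near:
  fixes f :: "'a::real_normed_vector \<Rightarrow> real" and \<gamma> :: "real \<Rightarrow> 'a"
  assumes aa: "aa > 0"
    and ac: "(\<lambda>t. f (\<gamma> t) - aa * t ^ n) \<in> o[at_right 0](\<lambda>t. t ^ n)"
    and lim: "(\<gamma> \<longlongrightarrow> 0) (at_right 0)"
    and U: "open U" "0 \<in> U"
  shows "\<exists>y\<in>U. f y > 0"
proof -
  have l: "((\<lambda>t. (f (\<gamma> t) - aa * t ^ n) / t ^ n) \<longlongrightarrow> 0) (at_right 0)"
    using ac smalloD_tendsto by blast
  have ev1: "\<forall>\<^sub>F t in at_right 0. \<gamma> t \<in> U" using topological_tendstoD[OF lim U] .
  have ev2: "\<forall>\<^sub>F t in at_right 0. dist ((f (\<gamma> t) - aa * t ^ n) / t ^ n) 0 < aa / 2"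
    using tendstoD[OF l, of "aa/2"] aa by simp
  have "\<forall>\<^sub>F t in at_right 0. \<gamma> t \<in> U \<and> f (\<gamma> t) > 0"
    using ev1 ev2 eventually_at_right_less[of "0::real"]
  proof eventually_elim
    case (elim t)
    then have t: "t > 0" "\<gamma> t \<in> U" by auto
    have tn: "t ^ n > 0" using t by simp
    have "\<bar>(f (\<gamma> t) - aa * t ^ n) / t ^ n\<bar> < aa / 2" using elim by (simp add: dist_real_def)
    then have "\<bar>f (\<gamma> t) - aa * t ^ n\<bar> < aa / 2 * t ^ n" using tn by (simp add: abs_divide divide_less_eq)
    then have "f (\<gamma> t) > aa / 2 * t ^ n" by linarith
    moreover have "aa / 2 * t ^ n > 0" using tn aa by simp
    ultimately show ?case using t by linarith
  qed
  then obtain t where "\<gamma> t \<in> U \<and> f (\<gamma> t) > 0"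
    using eventually_happens trivial_limit_at_right_real by blast
  then show ?thesis by blast
qed

theorem proposition6p2:
  fixes f :: "'a::euclidean_space \<Rightarrow> real"
    and x :: "real \<Rightarrow> 'b::euclidean_space \<Rightarrow> 'a"
    and S :: "'b set" and \<epsilon> :: real and k :: nat
    and a :: "'b \<Rightarrow> real"
  assumes k: "k \<ge> 1"
    and f_C: "C_on (2*k+1) UNIV f"
    and crit: "(f has_derivative (\<lambda>_. 0)) (at 0)"
    and f0: "f 0 = 0"
    and traj: "test_trajectories x S \<epsilon>"
    and ind: "indicative x S \<epsilon> k f"
    and a_coeff: "\<forall>x0\<in>S. (\<lambda>t. f (x t x0) - a x0 * t ^ (2*k)) \<in> o[at_right 0](\<lambda>t. t ^ (2*k))"
  shows "((\<forall>x0\<in>S. a x0 > 0) \<longrightarrow>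
            (\<exists>c>0. \<exists>U. open U \<and> 0 \<in> U \<and> (\<forall>y\<in>U. f y \<ge> c * norm y ^ (2*k)))
          \<and> (\<exists>U. open U \<and> 0 \<in> U \<and> (\<forall>y\<in>U - {0}. f y > f 0)))
       \<and> ((\<forall>x0\<in>S. a x0 < 0) \<longrightarrow>
            (\<exists>c>0. \<exists>U. open U \<and> 0 \<in> U \<and> (\<forall>y\<in>U. f y \<le> - c * norm y ^ (2*k)))
          \<and> (\<exists>U. open U \<and> 0 \<in> U \<and> (\<forall>y\<in>U - {0}. f y < f 0)))
       \<and> ((\<exists>x0\<in>S. a x0 > 0) \<and> (\<exists>x0\<in>S. a x0 < 0) \<longrightarrow> saddle_point f)"
proof -
  have eps: "\<epsilon> > 0" and x00: "\<forall>x0\<in>S. x 0 x0 = 0"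
    using traj by (auto simp: test_trajectories_def)
  have S: "compact S"
    and I3: "\<forall>\<delta>. 0 < \<delta> \<and> \<delta> \<le> \<epsilon> \<longrightarrow> (\<exists>U. open U \<and> 0 \<in> U \<and> (\<forall>y\<in>U. \<exists>x0\<in>S. \<exists>t\<in>{0..\<delta>}. y = x t x0))"
    using ind by (auto simp: indicative_def)
  obtain W where W: "open W" "{0..\<epsilon>} \<times> S \<subseteq> W" "C_vec_on (2*k+1) W (\<lambda>p. x (fst p) (snd p))"
    using ind by (auto simp: indicative_def)
  have kpos: "(0::real) < 1" by simp
  have nf_C: "C_on (2*k+1) UNIV (\<lambda>y. - f y)"
    using C_on_cmult[OF open_UNIV f_C, of "-1"] by simp
  have nac: "\<forall>x0\<in>S. (\<lambda>t. - f (x t x0) - (- a x0) * t ^ (2*k)) \<in> o[at_right 0](\<lambda>t. t ^ (2*k))"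
  proof
    fix x0 assume "x0 \<in> S"
    then have h: "(\<lambda>t. f (x t x0) - a x0 * t ^ (2*k)) \<in> o[at_right 0](\<lambda>t. t ^ (2*k))"
      using a_coeff by blast
    have eq: "(\<lambda>t. - f (x t x0) - (- a x0) * t ^ (2*k)) = (\<lambda>t. - (f (x t x0) - a x0 * t ^ (2*k)))"
      by (rule ext) simp
    show "(\<lambda>t. - f (x t x0) - (- a x0) * t ^ (2*k)) \<in> o[at_right 0](\<lambda>t. t ^ (2*k))"
      unfolding eq using h by (simp only: landau_o.small.uminus_in_iff)
  qed
  have partA: "(\<exists>c>0. \<exists>U. open U \<and> 0 \<in> U \<and> (\<forall>y\<in>U. f y \<ge> c * norm y ^ (2*k)))
          \<and> (\<exists>U. open U \<and> 0 \<in> U \<and> (\<forall>y\<in>U - {0}. f y > f 0))" if pos: "\<forall>x0\<in>S. a x0 > 0"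
  proof -
    obtain c U where c: "c > 0" and U: "open U" "0 \<in> U" "\<forall>y\<in>U. f y \<ge> c * norm y ^ (2*k)"
      using core[OF k f_C f0 S eps W x00 I3 a_coeff pos] by blast
    have "\<forall>y\<in>U - {0}. f y > f 0"
    proof
      fix y assume y: "y \<in> U - {0}"
      then have "c * norm y ^ (2*k) > 0" using c by simp
      then show "f y > f 0" using U(3) y f0 by force
    qed
    then show ?thesis using c U by blast
  qed
  have partB: "(\<exists>c>0. \<exists>U. open U \<and> 0 \<in> U \<and> (\<forall>y\<in>U. f y \<le> - c * norm y ^ (2*k)))
          \<and> (\<exists>U. open U \<and> 0 \<in> U \<and> (\<forall>y\<in>U - {0}. f y < f 0))" if neg: "\<forall>x0\<in>S. a x0 < 0"
  proof -
    have npos: "\<forall>x0\<in>S. - a x0 > 0" using neg by simp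
    have nf0: "- f 0 = 0" using f0 by simp
    obtain c U where c: "c > 0" and U: "open U" "0 \<in> U" "\<forall>y\<in>U. - f y \<ge> c * norm y ^ (2*k)"
      using core[OF k nf_C nf0 S eps W x00 I3 nac npos] by blast
    have U3: "\<forall>y\<in>U. f y \<le> - c * norm y ^ (2*k)" using U(3) by force
    have "\<forall>y\<in>U - {0}. f y < f 0"
    proof
      fix y assume y: "y \<in> U - {0}"
      then have "c * norm y ^ (2*k) > 0" using c by simp
      then show "f y < f 0" using U3 y f0 by force
    qed
    then show ?thesis using c U(1,2) U3 by blast
  qed
  have xlim: "((\<lambda>t. x t x0) \<longlongrightarrow> 0) (at_right 0)" if x0: "x0 \<in> S" for x0
  proof -
    define X where "X = (\<lambda>p::real\<times>'b. x (fst p) (snd p))"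
    have "\<forall>j\<in>Basis. C_on (2*k+1) W (\<lambda>p. X p \<bullet> j)" using W(3) by (simp add: C_vec_on_def X_def)
    then have "\<forall>j\<in>Basis. continuous_on W (\<lambda>p. X p \<bullet> j)" using C_on_cont[OF W(1)] by blast
    then have "continuous_on W (\<lambda>p. \<Sum>j\<in>Basis. (X p \<bullet> j) *\<^sub>R j)"
      by (intro continuous_on_sum continuous_on_scaleR continuous_on_const) auto
    then have cW: "continuous_on W X" by (simp add: euclidean_representation)
    have "(0, x0) \<in> W" using W(2) x0 eps by auto
    then have "isCont X (0, x0)" using cW W(1) continuous_on_eq_continuous_at by blast
    moreover have "isCont (\<lambda>t::real. (t, x0)) 0" by (intro continuous_intros)
    ultimately have "isCont (\<lambda>t. X (t, x0)) 0"
      using isCont_o2[where f = "\<lambda>t::real. (t, x0)" and a = 0 and g = X] by simp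
    then have "((\<lambda>t. X (t, x0)) \<longlongrightarrow> X (0, x0)) (at 0)" by (simp add: isCont_def)
    then have "((\<lambda>t. X (t, x0)) \<longlongrightarrow> X (0, x0)) (at_right 0)" by (simp add: filterlim_at_split)
    then show ?thesis using x00 x0 by (simp add: X_def)
  qed
  have partC: "saddle_point f" if h1: "\<exists>x0\<in>S. a x0 > 0" and h2: "\<exists>x0\<in>S. a x0 < 0"
  proof -
    obtain p where p: "p \<in> S" "a p > 0" using h1 by blast
    obtain q where q: "q \<in> S" "a q < 0" using h2 by blast
    show ?thesis unfolding saddle_point_def
    proof (intro allI impI conjI)
      fix U :: "'a set" assume U: "open U \<and> 0 \<in> U"
      show "\<exists>y\<in>U. f y > 0"
        using pos_near[where aa = "a p" and f = f and \<gamma> = "\<lambda>t. x t p" and n = "2*k" and U = U] p a_coeff xlim U by blast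
      have "\<exists>y\<in>U. - f y > 0"
        using pos_near[where aa = "- a q" and f = "\<lambda>y. - f y" and \<gamma> = "\<lambda>t. x t q" and n = "2*k" and U = U] q nac xlim U by auto
      then show "\<exists>y\<in>U. f y < 0" by auto
    qed
  qed
  show ?thesis using partA partB partC by blast
qed

end
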